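(* Let $\mathcal{L}=\langle \mathbb{M},\mathbb{E},\mathbb{P},\ell\rangle$ be a proposition conserving model lattice, let $F$ be a finite set of plans (foils), and let $\mathcal{M}_H,\mathcal{M}_i\in\mathbb{M}$ with $\mathcal{M}_H\sqsubseteq\mathcal{M}_i$. If $E\subseteq\mathbb{P}$ is an explanation for $\mathcal{M}_i$ and $F$, then $E$ is also an explanation for $\mathcal{M}_H$ and $F$.
   Context: A planning model is $\mathcal{M}=\langle P,S,A,I,G\rangle$: $P$ a finite set of propositions, $S$ a set of states with each $s\in S$ identified with a subset $s\subseteq P$, $A$ a set of actions, $I\in S$ the initial state, $G\subseteq P$ the goal. Each action $a$ has a precondition set $\mathrm{prec}_a$ and add/delete effects $e_a^+,e_a^-$; $a(s)=(s\cup e_a^+)\setminus e_a^-$ if $\mathrm{prec}_a\subseteq s$, and $a(s)=s$ otherwise. A plan $\pi=\langle a_1,\dots,a_n\rangle$ is valid in $\mathcal{M}$, written $\pi(I)\models_{\mathcal{M}}G$, if $\pi(I)\supseteq G$. The model induces a transition system whose nodes are states and whose edges $s_1\xrightarrow{a}s_2$ are the valid transitions. For $\Lambda\subseteq P$, $f_\Lambda(s)=s\setminus\Lambda$ and $[S]_{f_\Lambda}=\{f_\Lambda(s):s\in S\}$. A model $\mathcal{M}'=\langle P',S',A',I',G'\rangle$ is an abstraction of $\mathcal{M}$ w.r.t. $\Lambda$, written $\mathcal{M}'=[\mathcal{M}]_{f_\Lambda}$, if $P'=P\setminus\Lambda$, $S'=[S]_{f_\Lambda}$, $I'=f_\Lambda(I)$,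 $G'=f_\Lambda(G)$, and for every transition $s_1\xrightarrow{a}s_2$ of $\mathcal{M}$ there is a transition $(s_1\setminus\Lambda)\xrightarrow{a}(s_2\setminus\Lambda)$ of $\mathcal{M}'$ (abstract models may have non-deterministic effects). Write $\mathcal{M}\sqsubseteq\mathcal{M}'$ if $\mathcal{M}'=[\mathcal{M}]_{f_\Lambda}$ for some $\Lambda$. Abstraction functions are assumed commutative and idempotent. A model lattice for $\mathcal{M}^\#$ is $\mathcal{L}=\langle\mathbb{M},\mathbb{E},\mathbb{P},\ell\rangle$ with $\mathcal{M}^\#\in\mathbb{M}$, $\mathcal{M}^\#\sqsubseteq\mathcal{M}'$ for all $\mathcal{M}'\in\mathbb{M}$, and each edge $(\mathcal{M}_i,\mathcal{M}_j)\in\mathbb{E}$ has a label $\ell(\mathcal{M}_i,\mathcal{M}_j)=p\in\mathbb{P}$ with $[\mathcal{M}_i]_{f_p}=\mathcal{M}_j$. The concretization $\gamma_p(\mathcal{M})$ is the $\mathcal{M}'$ with $(\mathcal{M}',\mathcal{M})\in\mathbb{E}$ and $\ell(\mathcal{M}',\mathcal{M})=p$; for $E\subseteq\mathbb{P}$, $\gamma_E(\mathcal{M})$ is the result of applying the concretizations for all $p\in E$. The lattice is proposition conserving if for every $\mathcal{M}\in\mathbb{M}$ and every $p\in\mathbb{P}$ not among the propositions of $\mathcal{M}$ there is $\mathcal{M}'\in\mathbb{M}$ with $(\mathcal{M}',\mathcal{M})\in\mathbb{E}$ and label $p$. For a model $\mathcal{M}_H\in\mathbb{M}$ and a set of plans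 $F$, a set $E\subseteq\mathbb{P}$ is an explanation if for all $\pi\in F$, $\pi$ is not valid in $\gamma_E(\mathcal{M}_H)$, i.e. $\pi(I_{\gamma_E(\mathcal{M}_H)})\not\models_{\gamma_E(\mathcal{M}_H)}G_{\gamma_E(\mathcal{M}_H)}$. *)

theory Defs
  imports Main
begin

record ('p, 'a) planning_model =
  pm_props  :: "'p set"
  pm_states :: "'p set set"
  pm_acts   :: "'a set"
  pm_prec   :: "'a \<Rightarrow> 'p set"
  pm_add    :: "'a \<Rightarrow> 'p set"
  pm_del    :: "'a \<Rightarrow> 'p set"
  pm_init   :: "'p set"
  pm_goal   :: "'p set"

definition apply_act :: "('p, 'a) planning_model \<Rightarrow> 'a \<Rightarrow> 'p set \<Rightarrow> 'p set" where
  "apply_act \<Pi> a s =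
     (if pm_prec \<Pi> a \<subseteq> s then (s \<union> pm_add \<Pi> a) - pm_del \<Pi> a else s)"

definition wf_planning_model :: "('p, 'a) planning_model \<Rightarrow> bool" where
  "wf_planning_model \<Pi> \<longleftrightarrow>
     finite (pm_props \<Pi>) \<and>
     pm_states \<Pi> \<subseteq> Pow (pm_props \<Pi>) \<and>
     pm_init \<Pi> \<in> pm_states \<Pi> \<and>
     pm_goal \<Pi> \<subseteq> pm_props \<Pi> \<and>
     (\<forall>s\<in>pm_states \<Pi>. \<forall>a\<in>pm_acts \<Pi>. apply_act \<Pi> a s \<in> pm_states \<Pi>)"

record ('p, 'a) model =
  props  :: "'p set"
  states :: "'p set set"
  acts   :: "'a set"
  trans  :: "('p set \<times> 'a \<times> 'p set) set"
  init   :: "'p set"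
  goal   :: "'p set"

definition ts_of :: "('p, 'a) planning_model \<Rightarrow> ('p, 'a) model" where
  "ts_of \<Pi> = \<lparr> props = pm_props \<Pi>, states = pm_states \<Pi>, acts = pm_acts \<Pi>,
      trans = {(s, a, apply_act \<Pi> a s) | s a. s \<in> pm_states \<Pi> \<and> a \<in> pm_acts \<Pi>},
      init = pm_init \<Pi>, goal = pm_goal \<Pi> \<rparr>"

fun reaches :: "('p, 'a) model \<Rightarrow> 'a list \<Rightarrow> 'p set \<Rightarrow> 'p set \<Rightarrow> bool" where
  "reaches M [] s s' \<longleftrightarrow> s' = s"
| "reaches M (a # \<pi>) s s' \<longleftrightarrow> (\<exists>t. (s, a, t) \<in> trans M \<and> reaches M \<pi> t s')"

definition plan_valid :: "('p, 'a) model \<Rightarrow> 'a list \<Rightarrow> bool" where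
  "plan_valid M \<pi> \<longleftrightarrow> (\<exists>s. reaches M \<pi> (init M) s \<and> goal M \<subseteq> s)"

definition abstr :: "'p set \<Rightarrow> ('p, 'a) model \<Rightarrow> ('p, 'a) model" where
  "abstr \<Lambda> M = \<lparr> props = props M - \<Lambda>,
      states = (\<lambda>s. s - \<Lambda>) ` states M,
      acts = acts M,
      trans = (\<lambda>(s1, a, s2). (s1 - \<Lambda>, a, s2 - \<Lambda>)) ` trans M,
      init = init M - \<Lambda>,
      goal = goal M - \<Lambda> \<rparr>"

definition less_abstract :: "('p, 'a) model \<Rightarrow> ('p, 'a) model \<Rightarrow> bool" where
  "less_abstract M M' \<longleftrightarrow> (\<exists>\<Lambda>. M' = abstr \<Lambda> M)"

definition model_lattice ::
  "('p, 'a) model \<Rightarrow> ('p, 'a) model set \<Rightarrow> (('p, 'a) model \<times> ('p, 'a) model) set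
   \<Rightarrow> 'p set \<Rightarrow> (('p, 'a) model \<times> ('p, 'a) model \<Rightarrow> 'p) \<Rightarrow> bool" where
  "model_lattice Msharp MM EE PP lbl \<longleftrightarrow>
     (\<exists>\<Pi>. wf_planning_model \<Pi> \<and> Msharp = ts_of \<Pi>) \<and>
     Msharp \<in> MM \<and>
     (\<forall>M'\<in>MM. less_abstract Msharp M') \<and>
     EE \<subseteq> MM \<times> MM \<and>
     (\<forall>(Mi, Mj)\<in>EE. Mi \<noteq> Mj \<and> lbl (Mi, Mj) \<in> PP \<and> abstr {lbl (Mi, Mj)} Mi = Mj)"

definition prop_conserving ::
  "('p, 'a) model set \<Rightarrow> (('p, 'a) model \<times> ('p, 'a) model) set
   \<Rightarrow> 'p set \<Rightarrow> (('p, 'a) model \<times> ('p, 'a) model \<Rightarrow> 'p) \<Rightarrow> bool" where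
  "prop_conserving MM EE PP lbl \<longleftrightarrow>
     (\<forall>M\<in>MM. \<forall>p\<in>PP. p \<notin> props M \<longrightarrow>
        (\<exists>M'\<in>MM. (M', M) \<in> EE \<and> lbl (M', M) = p))"

text \<open>Concretization gamma_p(M): the M' with an edge (M', M) labelled p
  (M itself if there is no such edge, e.g. if p is already a proposition of M).\<close>
definition concretize ::
  "(('p, 'a) model \<times> ('p, 'a) model) set \<Rightarrow> (('p, 'a) model \<times> ('p, 'a) model \<Rightarrow> 'p)
   \<Rightarrow> 'p \<Rightarrow> ('p, 'a) model \<Rightarrow> ('p, 'a) model" where
  "concretize EE lbl p M =
     (if \<exists>M'. (M', M) \<in> EE \<and> lbl (M', M) = p
      then (THE M'. (M', M) \<in> EE \<and> lbl (M', M) = p) else M)"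

text \<open>gamma_E(M): results of applying gamma_p for all p in E (in any order).\<close>
inductive concretize_set ::
  "(('p, 'a) model \<times> ('p, 'a) model) set \<Rightarrow> (('p, 'a) model \<times> ('p, 'a) model \<Rightarrow> 'p)
   \<Rightarrow> 'p set \<Rightarrow> ('p, 'a) model \<Rightarrow> ('p, 'a) model \<Rightarrow> bool"
  for EE lbl where
  empty: "concretize_set EE lbl {} M M"
| insert: "concretize_set EE lbl E M M1 \<Longrightarrow> p \<notin> E \<Longrightarrow>
           concretize_set EE lbl (insert p E) M (concretize EE lbl p M1)"

definition is_explanation ::
  "(('p, 'a) model \<times> ('p, 'a) model) set \<Rightarrow> 'p set \<Rightarrow> (('p, 'a) model \<times> ('p, 'a) model \<Rightarrow> 'p)
   \<Rightarrow> ('p, 'a) model \<Rightarrow> 'a list set \<Rightarrow> 'p set \<Rightarrow> bool" where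
  "is_explanation EE PP lbl MH F E \<longleftrightarrow>
     E \<subseteq> PP \<and> finite E \<and>
     (\<forall>M'. concretize_set EE lbl E MH M' \<longrightarrow> (\<forall>\<pi>\<in>F. \<not> plan_valid M' \<pi>))"

end

theory Submission imports Defs begin

lemma abstr_abstr: "abstr A (abstr B M) = abstr (A \<union> B) M"
  unfolding abstr_def by (auto simp: image_image case_prod_beta Diff_Un Int_commute set_diff_eq)

lemma abstr_restrict:
  assumes "wf_planning_model \<Pi>"
  shows "abstr \<Lambda> (ts_of \<Pi>) = abstr (\<Lambda> \<inter> pm_props \<Pi>) (ts_of \<Pi>)"
proof -
  have sub: "\<And>s. s \<in> pm_states \<Pi> \<Longrightarrow> s - \<Lambda> = s - (\<Lambda> \<inter> pm_props \<Pi>)"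
    using assms unfolding wf_planning_model_def by blast
  have ap: "\<And>s a. s \<in> pm_states \<Pi> \<Longrightarrow> a \<in> pm_acts \<Pi> \<Longrightarrow> apply_act \<Pi> a s \<in> pm_states \<Pi>"
    using assms unfolding wf_planning_model_def by blast
  have i: "pm_init \<Pi> \<in> pm_states \<Pi>" and g: "pm_goal \<Pi> \<subseteq> pm_props \<Pi>"
    using assms unfolding wf_planning_model_def by blast+
  have st: "(\<lambda>s. s - \<Lambda>) ` pm_states \<Pi> = (\<lambda>s. s - (\<Lambda> \<inter> pm_props \<Pi>)) ` pm_states \<Pi>"
    using sub by (rule image_cong[OF refl])
  have tr: "(\<lambda>(s1, a, s2). (s1 - \<Lambda>, a, s2 - \<Lambda>)) ` {(s, a, apply_act \<Pi> a s) | s a. s \<in> pm_states \<Pi> \<and> a \<in> pm_acts \<Pi>}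
     = (\<lambda>(s1, a, s2). (s1 - (\<Lambda> \<inter> pm_props \<Pi>), a, s2 - (\<Lambda> \<inter> pm_props \<Pi>))) ` {(s, a, apply_act \<Pi> a s) | s a. s \<in> pm_states \<Pi> \<and> a \<in> pm_acts \<Pi>}"
    by (rule image_cong[OF refl]) (clarsimp, metis sub ap)
  show ?thesis unfolding abstr_def ts_of_def using st tr sub[OF i] g by auto
qed

lemma reaches_abstr: "reaches M \<pi> s s' \<Longrightarrow> reaches (abstr \<Lambda> M) \<pi> (s - \<Lambda>) (s' - \<Lambda>)"
proof (induction \<pi> arbitrary: s)
  case Nil then show ?case by simp
next
  case (Cons a \<pi>)
  then obtain t where t: "(s, a, t) \<in> trans M" "reaches M \<pi> t s'" by auto
  have "(s - \<Lambda>, a, t - \<Lambda>) \<in> trans (abstr \<Lambda> M)"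
    unfolding abstr_def using t(1) by (auto intro!: image_eqI[where x="(s,a,t)"])
  then show ?case using Cons.IH[OF t(2)] by auto
qed

lemma valid_abstr: "plan_valid M \<pi> \<Longrightarrow> plan_valid (abstr \<Lambda> M) \<pi>"
  unfolding plan_valid_def
  by (metis Diff_mono order_refl reaches_abstr abstr_def model.select_convs(5) model.select_convs(6))


theorem proposition1:
  fixes Msharp MH Mi :: "('p, 'a) model"
    and MM :: "('p, 'a) model set"
    and EE :: "(('p, 'a) model \<times> ('p, 'a) model) set"
    and PP :: "'p set"
    and lbl :: "('p, 'a) model \<times> ('p, 'a) model \<Rightarrow> 'p"
    and F :: "'a list set"
    and E :: "'p set"
  assumes "model_lattice Msharp MM EE PP lbl"
    and "prop_conserving MM EE PP lbl"
    and "finite F"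
    and "MH \<in> MM" and "Mi \<in> MM"
    and "less_abstract MH Mi"
    and "is_explanation EE PP lbl Mi F E"
  shows "is_explanation EE PP lbl MH F E"
proof -
  have lat1: "\<exists>\<Pi>. wf_planning_model \<Pi> \<and> Msharp = ts_of \<Pi>"
    and lat3: "\<forall>M'\<in>MM. less_abstract Msharp M'"
    and lat4: "EE \<subseteq> MM \<times> MM"
    and lat5: "\<forall>(Mi, Mj)\<in>EE. Mi \<noteq> Mj \<and> lbl (Mi, Mj) \<in> PP \<and> abstr {lbl (Mi, Mj)} Mi = Mj"
    using assms(1) unfolding model_lattice_def by simp_all
  obtain \<Pi> where wf: "wf_planning_model \<Pi>" and S: "Msharp = ts_of \<Pi>" using lat1 by blast
  define P where "P = props Msharp"
  have PP: "P = pm_props \<Pi>" unfolding P_def S ts_of_def by simp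
  have C: "M = abstr (P - props M) Msharp \<and> props M \<subseteq> P" if "M \<in> MM" for M
  proof -
    have "less_abstract Msharp M" using lat3 that by blast
    then obtain \<Lambda> where L: "M = abstr \<Lambda> Msharp" unfolding less_abstract_def by blast
    have pm: "props M = P - \<Lambda>" unfolding L P_def abstr_def by simp
    have "M = abstr (\<Lambda> \<inter> P) Msharp" unfolding L S PP by (rule abstr_restrict[OF wf])
    moreover have "\<Lambda> \<inter> P = P - props M" using pm by blast
    ultimately show ?thesis using pm by auto
  qed
  have eq: "M1 = M2" if "M1 \<in> MM" "M2 \<in> MM" "props M1 = props M2" for M1 M2
  proof -
    have "M1 = abstr (P - props M1) Msharp" "M2 = abstr (P - props M2) Msharp"
      using C[OF that(1)] C[OF that(2)] by auto
    then show ?thesis using that(3) by simp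
  qed
  have edge: "M' \<in> MM \<and> props M' = insert p (props M1)"
    if "(M', M1) \<in> EE" "lbl (M', M1) = p" for M' M1 p
  proof -
    have e: "M' \<in> MM" "M1 \<in> MM" "M' \<noteq> M1" "abstr {p} M' = M1"
    proof -
      have "M' \<in> MM" "M1 \<in> MM" using lat4 that(1) by auto
      moreover have "M' \<noteq> M1 \<and> abstr {lbl (M', M1)} M' = M1" using lat5 that(1) by fastforce
      ultimately show "M' \<in> MM" "M1 \<in> MM" "M' \<noteq> M1" "abstr {p} M' = M1" using that(2) by auto
    qed
    have pr: "props M1 = props M' - {p}" using e(4) unfolding abstr_def by auto
    have "p \<in> props M'"
    proof (rule ccontr)
      assume "p \<notin> props M'"
      then have "props M1 = props M'" using pr by auto
      then show False using eq[OF e(2) e(1)] e(3) by simp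
    qed
    then show ?thesis using pr e(1) by auto
  qed
  have inv: "M' \<in> MM \<and> props M' = props M \<union> E'"
    if "concretize_set EE lbl E' M M'" "M \<in> MM" "E' \<subseteq> PP" for E' M M'
    using that
  proof (induction rule: concretize_set.induct)
    case (empty M) then show ?case by simp
  next
    case (insert E' M M1 p)
    then have IH: "M1 \<in> MM" "props M1 = props M \<union> E'" "p \<in> PP" by auto
    show ?case
    proof (cases "\<exists>M'. (M', M1) \<in> EE \<and> lbl (M', M1) = p")
      case True
      then obtain M' where M': "(M', M1) \<in> EE" "lbl (M', M1) = p" by blast
      have u: "\<exists>!M'. (M', M1) \<in> EE \<and> lbl (M', M1) = p"
      proof (rule ex1I[of _ M'])
        show "(M', M1) \<in> EE \<and> lbl (M', M1) = p" using M' by simp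
      next
        fix M2 assume "(M2, M1) \<in> EE \<and> lbl (M2, M1) = p"
        then have "M2 \<in> MM" "props M2 = insert p (props M1)" using edge by auto
        moreover have "M' \<in> MM" "props M' = insert p (props M1)" using edge M' by auto
        ultimately show "M2 = M'" using eq by simp
      qed
      have "(concretize EE lbl p M1, M1) \<in> EE \<and> lbl (concretize EE lbl p M1, M1) = p"
        unfolding concretize_def using True theI'[OF u] by simp
      then show ?thesis using edge IH by auto
    next
      case False
      then have c: "concretize EE lbl p M1 = M1" unfolding concretize_def by (simp only: if_False)
      have "p \<in> props M1" using False assms(2) IH unfolding prop_conserving_def by blast
      then show ?thesis using c IH by auto
    qed
  qed
  have ex: "\<exists>M'. concretize_set EE lbl E' M M'" if "finite E'" for E' M
    using that
  proof (induction rule: finite_induct)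
    case empty show ?case using concretize_set.empty by (rule exI)
  next
    case (insert p E')
    then obtain M1 where m1: "concretize_set EE lbl E' M M1" by blast
    show ?case using concretize_set.insert[OF m1 insert(2)] by (rule exI)
  qed
  have eE: "E \<subseteq> PP" and fE: "finite E"
    and eA: "\<And>M'. concretize_set EE lbl E Mi M' \<Longrightarrow> \<forall>\<pi>\<in>F. \<not> plan_valid M' \<pi>"
    using assms(7) unfolding is_explanation_def by auto
  have "\<forall>\<pi>\<in>F. \<not> plan_valid M' \<pi>" if cs: "concretize_set EE lbl E MH M'" for M'
  proof
    fix \<pi> assume piF: "\<pi> \<in> F"
    obtain Mi' where cs': "concretize_set EE lbl E Mi Mi'" using ex[OF fE] by blast
    have a: "M' \<in> MM" "props M' = props MH \<union> E" using inv[OF cs assms(4) eE] by auto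
    have b: "Mi' \<in> MM" "props Mi' = props Mi \<union> E" using inv[OF cs' assms(5) eE] by auto
    obtain \<Lambda> where "Mi = abstr \<Lambda> MH" using assms(6) unfolding less_abstract_def by blast
    then have "props Mi \<subseteq> props MH" unfolding abstr_def by auto
    then have sub: "props Mi' \<subseteq> props M'" using a b by auto
    have "Mi' = abstr (P - props Mi') Msharp" using C[OF b(1)] by simp
    also have "\<dots> = abstr (P - props Mi') (abstr (P - props M') Msharp)"
    proof -
      have "(P - props Mi') \<union> (P - props M') = P - props Mi'" using sub by blast
      then show ?thesis unfolding abstr_abstr by simp
    qed
    also have "abstr (P - props M') Msharp = M'" using C[OF a(1)] by simp
    finally have Mi'eq: "Mi' = abstr (P - props Mi') M'" .
    show "\<not> plan_valid M' \<pi>"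
    proof
      assume "plan_valid M' \<pi>"
      then have "plan_valid Mi' \<pi>" using valid_abstr[of M' \<pi> "P - props Mi'"] Mi'eq by simp
      then show False using eA[OF cs'] piF by blast
    qed
  qed
  then show ?thesis using eE fE unfolding is_explanation_def by blast
qed

end
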